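(* Let $f\in C^2(\mathbb{R}^d)$ with $\nabla f$ globally $L$-Lipschitz, $h>0$, $\beta\ge0$, $c\le\gamma_k\le C$ ($0<c\le C$), and assume $\beta+\frac h2<\frac cL$. Let $(x_k)$ be generated by $y_k=x_k+\alpha_k(x_k-x_{k-1})-\beta_k(\nabla f(x_k)-\nabla f(x_{k-1}))$, $x_{k+1}=y_k-s_k\nabla f(x_k)$ ($k\ge1$), with $\alpha_k=\frac1{1+\gamma_kh}$, $\beta_k=\beta h\alpha_k$, $s_k=h^2\alpha_k$. Let $v_k=x_k-x_{k-1}$, $C_1=\frac1{h^2}+\frac{\beta L}h$ and $V_k=f(x_k)+\frac{C_1}2\|v_k\|^2$. Then for every $k\ge1$, $$V_{k+1}\le V_k-\delta\|v_{k+1}\|^2,\qquad \delta=\frac ch-\frac L2-\frac{\beta L}h>0.$$ *)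

theory Defs
  imports "HOL-Analysis.Analysis"
begin

definition C2_on_UNIV :: "('a::euclidean_space \<Rightarrow> real) \<Rightarrow> bool" where
  "C2_on_UNIV f \<longleftrightarrow> (\<exists>g D. (\<forall>x. (f has_derivative (\<lambda>v. g x \<bullet> v)) (at x)) \<and>
      (\<forall>x. (g has_derivative blinfun_apply (D x)) (at x)) \<and> continuous_on UNIV D)"

end

theory Submission
  imports Defs
begin

lemma descent:
  fixes f :: "'a::euclidean_space \<Rightarrow> real" and g :: "'a \<Rightarrow> 'a"
  assumes grad: "\<And>z. (f has_derivative (\<lambda>v. g z \<bullet> v)) (at z)"
    and Lip: "L-lipschitz_on UNIV g"
  shows "f y \<le> f x + g x \<bullet> (y - x) + L / 2 * (norm (y - x))\<^sup>2"
proof -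
  define d where "d = y - x"
  define \<phi> where "\<phi> t = f (x + t *\<^sub>R d) - t * (g x \<bullet> d) - L / 2 * t\<^sup>2 * (norm d)\<^sup>2" for t
  have der: "(\<phi> has_real_derivative (g (x + t *\<^sub>R d) \<bullet> d - g x \<bullet> d - L * t * (norm d)\<^sup>2)) (at t)" for t
  proof -
    have h1: "((\<lambda>t. x + t *\<^sub>R d) has_derivative (\<lambda>s. s *\<^sub>R d)) (at t)"
      by (auto intro!: derivative_eq_intros)
    have h2: "((\<lambda>t. f (x + t *\<^sub>R d)) has_derivative (\<lambda>s. g (x + t *\<^sub>R d) \<bullet> (s *\<^sub>R d))) (at t)"
      using has_derivative_compose[OF h1 grad] by simp
    have h3: "((\<lambda>t. f (x + t *\<^sub>R d)) has_real_derivative (g (x + t *\<^sub>R d) \<bullet> d)) (at t)"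
      unfolding has_field_derivative_def using h2 by (simp add: mult.commute[of _ "g (x + t *\<^sub>R d) \<bullet> d"])
    show ?thesis unfolding \<phi>_def
      by (rule h3 derivative_eq_intros refl | simp add: power2_eq_square)+
  qed
  have "\<phi> 1 \<le> \<phi> 0"
  proof (rule DERIV_nonpos_imp_nonincreasing[of 0 1 \<phi>])
    fix t :: real assume t0: "0 \<le> t" and t1: "t \<le> 1"
    note t = t0 t1
    have "g (x + t *\<^sub>R d) \<bullet> d - g x \<bullet> d = (g (x + t *\<^sub>R d) - g x) \<bullet> d" by (simp add: inner_diff_left)
    also have "\<dots> \<le> norm (g (x + t *\<^sub>R d) - g x) * norm d" by (rule norm_cauchy_schwarz)
    also have "\<dots> \<le> (L * norm (t *\<^sub>R d)) * norm d"
      using lipschitz_onD[OF Lip, of "x + t *\<^sub>R d" x] by (intro mult_right_mono) (auto simp: dist_norm)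
    also have "\<dots> = L * t * (norm d)\<^sup>2" using t by (simp add: power2_eq_square)
    finally have le: "g (x + t *\<^sub>R d) \<bullet> d - g x \<bullet> d - L * t * (norm d)\<^sup>2 \<le> 0" by simp
    show "\<exists>y. (\<phi> has_real_derivative y) (at t) \<and> y \<le> 0" using der[of t] le by blast
  qed simp
  thus ?thesis unfolding \<phi>_def d_def by simp
qed


theorem mainTheorem7:
  fixes f :: "'a::euclidean_space \<Rightarrow> real"
    and g :: "'a \<Rightarrow> 'a"
    and x :: "nat \<Rightarrow> 'a"
    and \<gamma> :: "nat \<Rightarrow> real"
    and L h \<beta> c C :: real
  assumes C2: "C2_on_UNIV f"
    and grad: "\<And>z. (f has_derivative (\<lambda>v. g z \<bullet> v)) (at z)"
    and Lip: "L-lipschitz_on UNIV g"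
    and Lpos: "L > 0"
    and hpos: "h > 0"
    and beta: "\<beta> \<ge> 0"
    and cpos: "0 < c" and cC: "c \<le> C"
    and gam: "\<And>k. k \<ge> 1 \<Longrightarrow> c \<le> \<gamma> k \<and> \<gamma> k \<le> C"
    and step: "\<beta> + h / 2 < c / L"
    and iter: "\<And>k. k \<ge> 1 \<Longrightarrow>
       x (k + 1) = (x k + (1 / (1 + \<gamma> k * h)) *\<^sub>R (x k - x (k - 1))
                     - (\<beta> * h * (1 / (1 + \<gamma> k * h))) *\<^sub>R (g (x k) - g (x (k - 1))))
                   - (h\<^sup>2 * (1 / (1 + \<gamma> k * h))) *\<^sub>R g (x k)"
  defines "C\<^sub>1 \<equiv> 1 / h\<^sup>2 + \<beta> * L / h"
    and "\<delta> \<equiv> c / h - L / 2 - \<beta> * L / h"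
  shows "\<delta> > 0 \<and>
    (\<forall>k\<ge>1. f (x (k + 1)) + C\<^sub>1 / 2 * (norm (x (k + 1) - x k))\<^sup>2
       \<le> f (x k) + C\<^sub>1 / 2 * (norm (x k - x (k - 1)))\<^sup>2 - \<delta> * (norm (x (k + 1) - x k))\<^sup>2)"
proof -
  have dpos: "\<delta> > 0"
  proof -
    have "L * (\<beta> + h / 2) < c" using step Lpos by (simp add: field_simps)
    hence "\<beta> * L + L * h / 2 < c" by (simp add: algebra_simps)
    hence "(\<beta> * L + L * h / 2) / h < c / h" using hpos by (simp add: divide_strict_right_mono)
    thus ?thesis unfolding \<delta>_def using hpos by (simp add: field_simps)
  qed
  have main: "f (x (k + 1)) + C\<^sub>1 / 2 * (norm (x (k + 1) - x k))\<^sup>2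
       \<le> f (x k) + C\<^sub>1 / 2 * (norm (x k - x (k - 1)))\<^sup>2 - \<delta> * (norm (x (k + 1) - x k))\<^sup>2"
    if k: "k \<ge> 1" for k
  proof -
    define a where "a = x k - x (k - 1)"
    define b where "b = x (k + 1) - x k"
    define p where "p = g (x k) - g (x (k - 1))"
    define G where "G = g (x k)"
    define \<alpha> where "\<alpha> = 1 / (1 + \<gamma> k * h)"
    have gk: "c \<le> \<gamma> k" using gam[OF k] by simp
    have gpos: "1 + \<gamma> k * h > 0" using gk cpos hpos by (smt (verit) mult_pos_pos)
    have beq: "b = \<alpha> *\<^sub>R a - (\<beta> * h * \<alpha>) *\<^sub>R p - (h\<^sup>2 * \<alpha>) *\<^sub>R G"
      unfolding b_def a_def p_def G_def \<alpha>_def using iter[OF k] by (simp add: algebra_simps)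
    have "b \<bullet> b = \<alpha> * (a \<bullet> b) - \<beta> * h * \<alpha> * (p \<bullet> b) - h\<^sup>2 * \<alpha> * (G \<bullet> b)"
      by (subst (1) beq) (simp add: inner_diff_left)
    then have "(1 + \<gamma> k * h) * (b \<bullet> b) = ((1 + \<gamma> k * h) * \<alpha>) * (a \<bullet> b - \<beta> * h * (p \<bullet> b) - h\<^sup>2 * (G \<bullet> b))"
    proof -
      have "(1 + \<gamma> k * h) * (b \<bullet> b) = (1 + \<gamma> k * h) * (\<alpha> * (a \<bullet> b) - \<beta> * h * \<alpha> * (p \<bullet> b) - h\<^sup>2 * \<alpha> * (G \<bullet> b))"
        using \<open>b \<bullet> b = _\<close> by simp
      also have "\<dots> = ((1 + \<gamma> k * h) * \<alpha>) * (a \<bullet> b - \<beta> * h * (p \<bullet> b) - h\<^sup>2 * (G \<bullet> b))"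
        by (simp add: algebra_simps)
      finally show ?thesis .
    qed
    moreover have "(1 + \<gamma> k * h) * \<alpha> = 1" using gpos unfolding \<alpha>_def by simp
    ultimately have eq: "(1 + \<gamma> k * h) * (b \<bullet> b) = a \<bullet> b - \<beta> * h * (p \<bullet> b) - h\<^sup>2 * (G \<bullet> b)"
      by simp
    have ab: "a \<bullet> b \<le> ((norm a)\<^sup>2 + (norm b)\<^sup>2) / 2"
    proof -
      have "a \<bullet> b \<le> norm a * norm b" by (rule norm_cauchy_schwarz)
      also have "\<dots> \<le> ((norm a)\<^sup>2 + (norm b)\<^sup>2) / 2" using sum_squares_bound[of "norm a" "norm b"] by simp
      finally show ?thesis .
    qed
    have pb: "- (p \<bullet> b) \<le> L * (((norm a)\<^sup>2 + (norm b)\<^sup>2) / 2)"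
    proof -
      have "- (p \<bullet> b) \<le> norm p * norm b" using norm_cauchy_schwarz[of "-p" b] by simp
      also have "\<dots> \<le> (L * norm a) * norm b"
        using lipschitz_onD[OF Lip, of "x k" "x (k - 1)"] unfolding p_def a_def
        by (intro mult_right_mono) (auto simp: dist_norm)
      also have "\<dots> = L * (norm a * norm b)" by simp
      also have "\<dots> \<le> L * (((norm a)\<^sup>2 + (norm b)\<^sup>2) / 2)"
        using Lpos by (intro mult_left_mono) (use sum_squares_bound[of "norm a" "norm b"] in simp, simp)
      finally show ?thesis .
    qed
    have desc: "f (x (k + 1)) \<le> f (x k) + G \<bullet> b + L / 2 * (norm b)\<^sup>2"
      using descent[OF grad Lip, of "x (k + 1)" "x k"] unfolding G_def b_def by simp
    have bb: "b \<bullet> b = (norm b)\<^sup>2" by (simp add: power2_norm_eq_inner)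
    define A where "A = (norm a)\<^sup>2"
    define B where "B = (norm b)\<^sup>2"
    have h2: "h\<^sup>2 > 0" using hpos by simp
    have pb2: "\<beta> * h * (- (p \<bullet> b)) \<le> \<beta> * h * (L * ((A + B) / 2))"
      using pb beta hpos unfolding A_def B_def by (intro mult_left_mono) auto
    have gB: "c * h * B \<le> \<gamma> k * h * B" using gk hpos unfolding B_def
      by (intro mult_right_mono) auto
    have key: "h\<^sup>2 * (G \<bullet> b + L / 2 * B + C\<^sub>1 / 2 * B + \<delta> * B) \<le> h\<^sup>2 * (C\<^sub>1 / 2 * A)"
    proof -
      have e1: "h\<^sup>2 * (G \<bullet> b) = a \<bullet> b - \<beta> * h * (p \<bullet> b) - (1 + \<gamma> k * h) * B"
        using eq bb unfolding B_def by simp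
      have e2: "h\<^sup>2 * (G \<bullet> b + L / 2 * B + C\<^sub>1 / 2 * B + \<delta> * B) =
        h\<^sup>2 * (G \<bullet> b) + B * (h\<^sup>2 * L / 2 + 1/2 + \<beta> * L * h / 2 + c * h - L * h\<^sup>2 / 2 - \<beta> * L * h)"
        unfolding C\<^sub>1_def \<delta>_def using hpos by (simp add: field_simps power2_eq_square)
      have e3: "h\<^sup>2 * (C\<^sub>1 / 2 * A) = A * (1/2 + \<beta> * L * h / 2)"
        unfolding C\<^sub>1_def using hpos by (simp add: field_simps power2_eq_square)
      have p: "- (\<beta> * h * (p \<bullet> b)) \<le> \<beta> * h * L * A / 2 + \<beta> * h * L * B / 2"
        using pb2 by (simp add: algebra_simps add_divide_distrib)
      have l: "a \<bullet> b - \<beta> * h * (p \<bullet> b) - (1 + \<gamma> k * h) * B + B * (h\<^sup>2 * L / 2 + 1/2 + \<beta> * L * h / 2 + c * h - L * h\<^sup>2 / 2 - \<beta> * L * h)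
         = a \<bullet> b - \<beta> * h * (p \<bullet> b) - B / 2 - \<gamma> k * h * B + c * h * B - \<beta> * h * L * B / 2"
        by (simp add: algebra_simps)
      have r: "A * (1/2 + \<beta> * L * h / 2) = A / 2 + \<beta> * h * L * A / 2" by (simp add: algebra_simps)
      have ab': "a \<bullet> b \<le> (A + B) / 2" using ab unfolding A_def B_def .
      show ?thesis unfolding e2 e3 e1 l r using ab' p gB by argo
    qed
    hence "G \<bullet> b + L / 2 * B + C\<^sub>1 / 2 * B + \<delta> * B \<le> C\<^sub>1 / 2 * A"
      using h2 by simp
    thus ?thesis using desc unfolding A_def B_def a_def b_def by simp
  qed
  show ?thesis using dpos main by blast
qed

end
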